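(* Let $\Gamma$ be a semigroupoid with object set $S$, $\tau\colon S\to X$ a map, and for $\gamma\in\Gamma$ let $L(\gamma)$ be the densely defined operator from $\ell^2_\tau(\Gamma;\tau(d(\gamma)))$ to $\ell^2_\tau(\Gamma;\tau(c(\gamma)))$ whose domain is the finitely supported functions, given by $L(\gamma)\delta_\beta=\delta_{\gamma\beta}$ if $c(\beta)=d(\gamma)$ and $L(\gamma)\delta_\beta=0$ otherwise. Let $m_\gamma\colon\Gamma^{d(\gamma)}\to\Gamma^{c(\gamma)}$, $m_\gamma(\alpha)=\gamma\alpha$. Then: (i) for $\beta\in\Gamma^{c(\gamma)}$, $\delta_\beta\in\mathrm{dom}\,L(\gamma)^*$ if $m_\gamma^{-1}(\{\beta\})$ is finite, while if $m_\gamma^{-1}(\{\beta\})$ is infinite then every vector of $\mathrm{dom}\,L(\gamma)^*$ is orthogonal to $\delta_\beta$; consequently $L(\gamma)$ is closable if and only if $m_\gamma^{-1}(\{\beta\})$ is finite for every $\beta\in\Gamma^{c(\gamma)}$. (ii) $L(\gamma)$ is bounded if and only if there is $N\in\mathbb N$ with $|m_\gamma^{-1}(\{\beta\})|\le N$ for all $\beta\in\Gamma^{c(\gamma)}$, and in that case $\|L(\gamma)\|\le N$. (iii) If $\Gamma$ satisfies: for every $\gamma\in\Gamma$ and $\beta\ne\beta'$ in $\Gamma^{d(\gamma)}$, $\gamma\beta\ne\gamma\beta'$, then each $L(\gamma)$ extends to a partial isometry and $(\tau;L)$ is an orthogonal representation of $\Gamma$ on $\{\ell^2_\tau(\Gamma;x)\}_{x\in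 X}$.
   Context: A semigroupoid $(\Gamma;S;d;c;\cdot)$ consists of nonempty sets $\Gamma,S$, maps $d,c\colon\Gamma\to S$, and for all $\alpha,\beta$ with $d(\alpha)=c(\beta)$ a product $\alpha\beta$ with $d(\alpha\beta)=d(\beta)$, $c(\alpha\beta)=c(\alpha)$, associative whenever defined; $\Gamma^s=\{\alpha:c(\alpha)=s\}$. For $x\in X$, $\ell^2_\tau(\Gamma;x)$ is the Hilbert space with orthonormal basis $\{\delta_\gamma:\gamma\in\Gamma,\ \tau(c(\gamma))=x\}$ (the zero space if this set is empty). A representation of $\Gamma$ on a family of Hilbert spaces $\{\mathcal H_x\}_{x\in X}$ with aggregation $\tau$ is a map $\Phi$ with $\Phi(\alpha)\in\mathcal B(\mathcal H_{\tau(d(\alpha))},\mathcal H_{\tau(c(\alpha))})$ and $\Phi(\alpha\beta)=\Phi(\alpha)\Phi(\beta)$ whenever $d(\alpha)=c(\beta)$; it is orthogonal if whenever $\tau(c(\alpha))=\tau(c(\beta))$ but $c(\alpha)\ne c(\beta)$, the ranges $\Phi(\alpha)\mathcal H_{\tau(d(\alpha))}$ and $\Phi(\beta)\mathcal H_{\tau(d(\beta))}$ are orthogonal. *)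

theory Defs
  imports "HOL-Analysis.Analysis"
begin

definition semigroupoid ::
  "'g set \<Rightarrow> 's set \<Rightarrow> ('g \<Rightarrow> 's) \<Rightarrow> ('g \<Rightarrow> 's) \<Rightarrow> ('g \<Rightarrow> 'g \<Rightarrow> 'g) \<Rightarrow> bool" where
  "semigroupoid \<Gamma> S d c pr \<longleftrightarrow>
     \<Gamma> \<noteq> {} \<and> S \<noteq> {} \<and> d ` \<Gamma> \<subseteq> S \<and> c ` \<Gamma> \<subseteq> S \<and>
     (\<forall>\<alpha>\<in>\<Gamma>. \<forall>\<beta>\<in>\<Gamma>. d \<alpha> = c \<beta> \<longrightarrow>
        pr \<alpha> \<beta> \<in> \<Gamma> \<and> d (pr \<alpha> \<beta>) = d \<beta> \<and> c (pr \<alpha> \<beta>) = c \<alpha>) \<and>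
     (\<forall>\<alpha>\<in>\<Gamma>. \<forall>\<beta>\<in>\<Gamma>. \<forall>\<gamma>\<in>\<Gamma>. d \<alpha> = c \<beta> \<and> d \<beta> = c \<gamma> \<longrightarrow>
        pr (pr \<alpha> \<beta>) \<gamma> = pr \<alpha> (pr \<beta> \<gamma>))"

definition fibre :: "'g set \<Rightarrow> ('g \<Rightarrow> 's) \<Rightarrow> 's \<Rightarrow> 'g set" where
  "fibre \<Gamma> c s = {\<alpha> \<in> \<Gamma>. c \<alpha> = s}"

definition mpre :: "'g set \<Rightarrow> ('g \<Rightarrow> 's) \<Rightarrow> ('g \<Rightarrow> 's) \<Rightarrow> ('g \<Rightarrow> 'g \<Rightarrow> 'g) \<Rightarrow> 'g \<Rightarrow> 'g \<Rightarrow> 'g set" where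
  "mpre \<Gamma> d c pr \<gamma> \<beta> = {\<alpha> \<in> fibre \<Gamma> c (d \<gamma>). pr \<gamma> \<alpha> = \<beta>}"

definition ell2 :: "'g set \<Rightarrow> ('g \<Rightarrow> 's) \<Rightarrow> ('s \<Rightarrow> 'x) \<Rightarrow> 'x \<Rightarrow> ('g \<Rightarrow> complex) set" where
  "ell2 \<Gamma> c \<tau> x = {f. (\<forall>\<gamma>. f \<gamma> \<noteq> 0 \<longrightarrow> \<gamma> \<in> \<Gamma> \<and> \<tau> (c \<gamma>) = x) \<and>
                         (\<lambda>\<gamma>. (cmod (f \<gamma>))\<^sup>2) summable_on UNIV}"

definition l2inner :: "('g \<Rightarrow> complex) \<Rightarrow> ('g \<Rightarrow> complex) \<Rightarrow> complex" where
  "l2inner f g = (\<Sum>\<^sub>\<infinity>\<gamma>. cnj (f \<gamma>) * g \<gamma>)"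

definition l2norm :: "('g \<Rightarrow> complex) \<Rightarrow> real" where
  "l2norm f = sqrt (\<Sum>\<^sub>\<infinity>\<gamma>. (cmod (f \<gamma>))\<^sup>2)"

definition delta :: "'g \<Rightarrow> 'g \<Rightarrow> complex" where
  "delta \<beta> = (\<lambda>\<alpha>. if \<alpha> = \<beta> then 1 else 0)"

definition adj_dom :: "('a \<Rightarrow> complex) set \<Rightarrow> ('b \<Rightarrow> complex) set \<Rightarrow> ('a \<Rightarrow> complex) set
     \<Rightarrow> (('a \<Rightarrow> complex) \<Rightarrow> ('b \<Rightarrow> complex)) \<Rightarrow> ('b \<Rightarrow> complex) set" where
  "adj_dom H1 H2 D T = {y \<in> H2. \<exists>z \<in> H1. \<forall>x \<in> D. l2inner y (T x) = l2inner z x}"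

definition graph_closure :: "('a \<Rightarrow> complex) set \<Rightarrow> ('b \<Rightarrow> complex) set \<Rightarrow> ('a \<Rightarrow> complex) set
     \<Rightarrow> (('a \<Rightarrow> complex) \<Rightarrow> ('b \<Rightarrow> complex)) \<Rightarrow> (('a \<Rightarrow> complex) \<times> ('b \<Rightarrow> complex)) set" where
  "graph_closure H1 H2 D T = {(x, y). x \<in> H1 \<and> y \<in> H2 \<and>
      (\<exists>xs. (\<forall>n. xs n \<in> D) \<and> (\<lambda>n. l2norm (\<lambda>i. xs n i - x i)) \<longlonglongrightarrow> 0 \<and>
            (\<lambda>n. l2norm (\<lambda>i. T (xs n) i - y i)) \<longlonglongrightarrow> 0)}"

definition closable_op where
  "closable_op H1 H2 D T \<longleftrightarrow>
     (\<forall>x y y'. (x, y) \<in> graph_closure H1 H2 D T \<and> (x, y') \<in> graph_closure H1 H2 D T \<longrightarrow> y = y')"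

definition bounded_op :: "('a \<Rightarrow> complex) set \<Rightarrow> (('a \<Rightarrow> complex) \<Rightarrow> ('b \<Rightarrow> complex)) \<Rightarrow> bool" where
  "bounded_op D T \<longleftrightarrow> (\<exists>C. \<forall>x \<in> D. l2norm (T x) \<le> C * l2norm x)"

definition op_norm :: "('a \<Rightarrow> complex) set \<Rightarrow> (('a \<Rightarrow> complex) \<Rightarrow> ('b \<Rightarrow> complex)) \<Rightarrow> real" where
  "op_norm D T = Sup {l2norm (T x) | x. x \<in> D \<and> l2norm x \<le> 1}"

definition bounded_linear_on where
  "bounded_linear_on H1 H2 V \<longleftrightarrow>
     (\<forall>f \<in> H1. V f \<in> H2) \<and>
     (\<forall>f \<in> H1. \<forall>g \<in> H1. \<forall>a::complex. V (\<lambda>i. a * f i + g i) = (\<lambda>j. a * V f j + V g j)) \<and>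
     (\<exists>C. \<forall>f \<in> H1. l2norm (V f) \<le> C * l2norm f)"

definition partial_isometry where
  "partial_isometry H1 H2 V \<longleftrightarrow> bounded_linear_on H1 H2 V \<and>
     (\<forall>f \<in> H1. (\<forall>k \<in> H1. V k = (\<lambda>_. 0) \<longrightarrow> l2inner k f = 0) \<longrightarrow> l2norm (V f) = l2norm f)"

definition Ldom where
  "Ldom \<Gamma> d c \<tau> \<gamma> = {f \<in> ell2 \<Gamma> c \<tau> (\<tau> (d \<gamma>)). finite {\<alpha>. f \<alpha> \<noteq> 0}}"

text \<open>Linear extension of \<open>\<delta>_\<beta> \<mapsto> \<delta>_{\<gamma>\<beta>}\<close> (if \<open>c \<beta> = d \<gamma>\<close>), \<open>\<delta>_\<beta> \<mapsto> 0\<close> otherwise.\<close>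
definition Lop :: "'g set \<Rightarrow> ('g \<Rightarrow> 's) \<Rightarrow> ('g \<Rightarrow> 's) \<Rightarrow> ('g \<Rightarrow> 'g \<Rightarrow> 'g) \<Rightarrow> 'g
     \<Rightarrow> ('g \<Rightarrow> complex) \<Rightarrow> ('g \<Rightarrow> complex)" where
  "Lop \<Gamma> d c pr \<gamma> f = (\<lambda>\<eta>. \<Sum>\<alpha> \<in> {\<alpha> \<in> mpre \<Gamma> d c pr \<gamma> \<eta>. f \<alpha> \<noteq> 0}. f \<alpha>)"

definition is_representation where
  "is_representation \<Gamma> d c pr H \<tau> \<Phi> \<longleftrightarrow>
     (\<forall>\<alpha> \<in> \<Gamma>. bounded_linear_on (H (\<tau> (d \<alpha>))) (H (\<tau> (c \<alpha>))) (\<Phi> \<alpha>)) \<and>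
     (\<forall>\<alpha> \<in> \<Gamma>. \<forall>\<beta> \<in> \<Gamma>. d \<alpha> = c \<beta> \<longrightarrow>
        (\<forall>f \<in> H (\<tau> (d \<beta>)). \<Phi> (pr \<alpha> \<beta>) f = \<Phi> \<alpha> (\<Phi> \<beta> f)))"

definition is_orthogonal_rep where
  "is_orthogonal_rep \<Gamma> d c pr H \<tau> \<Phi> \<longleftrightarrow> is_representation \<Gamma> d c pr H \<tau> \<Phi> \<and>
     (\<forall>\<alpha> \<in> \<Gamma>. \<forall>\<beta> \<in> \<Gamma>. \<tau> (c \<alpha>) = \<tau> (c \<beta>) \<and> c \<alpha> \<noteq> c \<beta> \<longrightarrow>
        (\<forall>f \<in> H (\<tau> (d \<alpha>)). \<forall>g \<in> H (\<tau> (d \<beta>)). l2inner (\<Phi> \<alpha> f) (\<Phi> \<beta> g) = 0))"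

end

theory Submission
  imports Defs "HOL-Real_Asymp.Real_Asymp"
begin


lemma sq_fin_supp:
  fixes f :: "'g \<Rightarrow> complex"
  assumes "finite A" "\<And>i. i \<notin> A \<Longrightarrow> f i = 0"
  shows "(\<lambda>i. (cmod (f i))\<^sup>2) summable_on UNIV"
    "(\<Sum>\<^sub>\<infinity>i. (cmod (f i))\<^sup>2) = (\<Sum>i\<in>A. (cmod (f i))\<^sup>2)"
proof -
  have "(\<lambda>i. (cmod (f i))\<^sup>2) summable_on UNIV \<longleftrightarrow> (\<lambda>i. (cmod (f i))\<^sup>2) summable_on A"
    by (rule summable_on_cong_neutral) (use assms in auto)
  then show "(\<lambda>i. (cmod (f i))\<^sup>2) summable_on UNIV" using assms by simp
  have "(\<Sum>\<^sub>\<infinity>i. (cmod (f i))\<^sup>2) = (\<Sum>\<^sub>\<infinity>i\<in>A. (cmod (f i))\<^sup>2)"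
    by (rule infsum_cong_neutral) (use assms in auto)
  then show "(\<Sum>\<^sub>\<infinity>i. (cmod (f i))\<^sup>2) = (\<Sum>i\<in>A. (cmod (f i))\<^sup>2)" using assms by simp
qed

lemma coord_le_l2norm:
  fixes f :: "'g \<Rightarrow> complex"
  assumes "(\<lambda>i. (cmod (f i))\<^sup>2) summable_on UNIV"
  shows "cmod (f i) \<le> l2norm f"
proof -
  have "(\<Sum>j\<in>{i}. (cmod (f j))\<^sup>2) \<le> (\<Sum>\<^sub>\<infinity>j. (cmod (f j))\<^sup>2)"
    by (rule finite_sum_le_infsum) (use assms in auto)
  then show ?thesis unfolding l2norm_def by (simp add: real_le_rsqrt)
qed

lemma sq_diff_summable:
  fixes f g :: "'g \<Rightarrow> complex"
  assumes "(\<lambda>i. (cmod (f i))\<^sup>2) summable_on UNIV" "(\<lambda>i. (cmod (g i))\<^sup>2) summable_on UNIV"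
  shows "(\<lambda>i. (cmod (f i - g i))\<^sup>2) summable_on UNIV"
proof -
  have s: "(\<lambda>i. 2 * (cmod (f i))\<^sup>2 + 2 * (cmod (g i))\<^sup>2) summable_on UNIV"
    by (intro summable_on_add summable_on_cmult_right assms)
  have "(\<lambda>i. norm ((cmod (f i - g i))\<^sup>2)) summable_on UNIV"
  proof (rule Infinite_Sum.abs_summable_on_comparison_test[OF _ ])
    show "(\<lambda>i. norm (2 * (cmod (f i))\<^sup>2 + 2 * (cmod (g i))\<^sup>2)) summable_on UNIV"
      using s by simp
    fix i
    have "cmod (f i - g i) \<le> cmod (f i) + cmod (g i)" by (rule norm_triangle_ineq4)
    then have "(cmod (f i - g i))\<^sup>2 \<le> (cmod (f i) + cmod (g i))\<^sup>2"
      by (simp add: power_mono)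
    also have "\<dots> \<le> 2 * (cmod (f i))\<^sup>2 + 2 * (cmod (g i))\<^sup>2"
    proof -
      have "0 \<le> (cmod (f i) - cmod (g i))\<^sup>2" by simp
      then show ?thesis by (simp add: power2_eq_square algebra_simps)
    qed
    finally show "norm ((cmod (f i - g i))\<^sup>2) \<le> norm (2 * (cmod (f i))\<^sup>2 + 2 * (cmod (g i))\<^sup>2)"
      by simp
  qed
  then show ?thesis by simp
qed

lemma l2inner_delta_left: "l2inner (delta b) f = f b"
proof -
  have "l2inner (delta b) f = (\<Sum>\<^sub>\<infinity>i\<in>{b}. cnj (delta b i) * f i)"
    unfolding l2inner_def by (rule infsum_cong_neutral) (auto simp: delta_def)
  then show ?thesis by (simp add: delta_def)
qed

lemma l2inner_delta_right: "l2inner f (delta b) = cnj (f b)"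
proof -
  have "l2inner f (delta b) = (\<Sum>\<^sub>\<infinity>i\<in>{b}. cnj (f i) * delta b i)"
    unfolding l2inner_def by (rule infsum_cong_neutral) (auto simp: delta_def)
  then show ?thesis by (simp add: delta_def)
qed




locale sgd =
  fixes \<Gamma> :: "'g set" and S :: "'s set" and d c :: "'g \<Rightarrow> 's"
    and pr :: "'g \<Rightarrow> 'g \<Rightarrow> 'g" and \<tau> :: "'s \<Rightarrow> 'x"
  assumes sg: "semigroupoid \<Gamma> S d c pr"
begin

lemma prod_props:
  assumes "\<gamma> \<in> \<Gamma>" "\<alpha> \<in> \<Gamma>" "c \<alpha> = d \<gamma>"
  shows "pr \<gamma> \<alpha> \<in> \<Gamma>" "c (pr \<gamma> \<alpha>) = c \<gamma>" "d (pr \<gamma> \<alpha>) = d \<alpha>"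
  using sg assms unfolding semigroupoid_def by auto

lemma assoc:
  assumes "\<alpha> \<in> \<Gamma>" "\<beta> \<in> \<Gamma>" "\<gamma> \<in> \<Gamma>" "d \<alpha> = c \<beta>" "d \<beta> = c \<gamma>"
  shows "pr (pr \<alpha> \<beta>) \<gamma> = pr \<alpha> (pr \<beta> \<gamma>)"
  using sg assms unfolding semigroupoid_def by blast

lemma mpre_iff: "\<alpha> \<in> mpre \<Gamma> d c pr \<gamma> \<beta> \<longleftrightarrow> \<alpha> \<in> \<Gamma> \<and> c \<alpha> = d \<gamma> \<and> pr \<gamma> \<alpha> = \<beta>"
  unfolding mpre_def fibre_def by auto

lemma mpre_target:
  assumes "\<gamma> \<in> \<Gamma>" "\<alpha> \<in> mpre \<Gamma> d c pr \<gamma> \<beta>"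
  shows "\<beta> \<in> \<Gamma>" "c \<beta> = c \<gamma>"
  using assms prod_props[of \<gamma> \<alpha>] by (auto simp: mpre_iff)

lemma mpre_empty:
  assumes "\<gamma> \<in> \<Gamma>" "\<beta> \<notin> fibre \<Gamma> c (c \<gamma>)"
  shows "mpre \<Gamma> d c pr \<gamma> \<beta> = {}"
  using assms mpre_target[of \<gamma> _ \<beta>] unfolding fibre_def by blast

lemma Lop_fin:
  assumes "finite (mpre \<Gamma> d c pr \<gamma> \<eta>)"
  shows "Lop \<Gamma> d c pr \<gamma> f \<eta> = (\<Sum>\<alpha>\<in>mpre \<Gamma> d c pr \<gamma> \<eta>. f \<alpha>)"
  unfolding Lop_def by (rule sum.mono_neutral_left) (use assms in auto)

lemma Lop_const:
  assumes "finite A" "A \<subseteq> mpre \<Gamma> d c pr \<gamma> \<beta>"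
  shows "Lop \<Gamma> d c pr \<gamma> (\<lambda>\<alpha>. if \<alpha> \<in> A then a else 0) =
         (\<lambda>\<eta>. if \<eta> = \<beta> then of_nat (card A) * a else 0)"
proof
  fix \<eta>
  show "Lop \<Gamma> d c pr \<gamma> (\<lambda>\<alpha>. if \<alpha> \<in> A then a else 0) \<eta> = (if \<eta> = \<beta> then of_nat (card A) * a else 0)"
  proof (cases "a = 0")
    case True then show ?thesis by (simp add: Lop_def)
  next
    case False
    have "{\<alpha> \<in> mpre \<Gamma> d c pr \<gamma> \<eta>. (if \<alpha> \<in> A then a else 0) \<noteq> 0} = (if \<eta> = \<beta> then A else {})"
      using False assms(2) by (auto simp: mpre_iff)
    then show ?thesis by (simp add: Lop_def)
  qed
qed

lemma Lop_delta:
  assumes "\<alpha> \<in> mpre \<Gamma> d c pr \<gamma> \<beta>"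
  shows "Lop \<Gamma> d c pr \<gamma> (delta \<alpha>) = delta \<beta>"
proof -
  have "delta \<alpha> = (\<lambda>x. if x \<in> {\<alpha>} then 1 else 0)" by (auto simp: delta_def)
  then show ?thesis using Lop_const[of "{\<alpha>}" \<gamma> \<beta> 1] assms by (auto simp: delta_def)
qed

lemma Lop_delta0:
  assumes "c \<alpha> \<noteq> d \<gamma>"
  shows "Lop \<Gamma> d c pr \<gamma> (delta \<alpha>) = (\<lambda>_. 0)"
  using assms by (auto simp: Lop_def delta_def mpre_iff)

lemma delta_ell2:
  assumes "\<alpha> \<in> \<Gamma>" "\<tau> (c \<alpha>) = x"
  shows "delta \<alpha> \<in> ell2 \<Gamma> c \<tau> x"
  using assms sq_fin_supp(1)[of "{\<alpha>}" "delta \<alpha>"] by (auto simp: ell2_def delta_def)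

lemma delta_Ldom:
  assumes "\<alpha> \<in> \<Gamma>" "\<tau> (c \<alpha>) = \<tau> (d \<gamma>)"
  shows "delta \<alpha> \<in> Ldom \<Gamma> d c \<tau> \<gamma>"
  using delta_ell2[OF assms] by (auto simp: Ldom_def delta_def)

lemma const_Ldom:
  assumes "\<gamma> \<in> \<Gamma>" "finite A" "A \<subseteq> mpre \<Gamma> d c pr \<gamma> \<beta>"
  shows "(\<lambda>\<alpha>. if \<alpha> \<in> A then a else 0) \<in> Ldom \<Gamma> d c \<tau> \<gamma>"
  using assms sq_fin_supp(1)[of A "(\<lambda>\<alpha>. if \<alpha> \<in> A then a else 0)"]
  by (auto simp: Ldom_def ell2_def mpre_iff intro: finite_subset[of _ A])

lemma l2norm_const:
  assumes "finite A"
  shows "l2norm (\<lambda>\<alpha>. if \<alpha> \<in> A then a else 0) = sqrt (real (card A)) * cmod a"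
proof -
  have "l2norm (\<lambda>\<alpha>. if \<alpha> \<in> A then a else 0) = sqrt (\<Sum>i\<in>A. (cmod a)\<^sup>2)"
    unfolding l2norm_def using sq_fin_supp(2)[of A "(\<lambda>\<alpha>. if \<alpha> \<in> A then a else 0)"] assms
    by simp
  also have "\<dots> = sqrt (real (card A)) * cmod a" by (simp add: real_sqrt_mult)
  finally show ?thesis .
qed

end



context sgd begin

lemma ell2_summable: "f \<in> ell2 \<Gamma> c \<tau> x \<Longrightarrow> (\<lambda>i. (cmod (f i))\<^sup>2) summable_on UNIV"
  by (simp add: ell2_def)

lemma part_i_fin:
  assumes g: "\<gamma> \<in> \<Gamma>" and b: "\<beta> \<in> fibre \<Gamma> c (c \<gamma>)" and fin: "finite (mpre \<Gamma> d c pr \<gamma> \<beta>)"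
  shows "delta \<beta> \<in> adj_dom (ell2 \<Gamma> c \<tau> (\<tau> (d \<gamma>))) (ell2 \<Gamma> c \<tau> (\<tau> (c \<gamma>)))
                            (Ldom \<Gamma> d c \<tau> \<gamma>) (Lop \<Gamma> d c pr \<gamma>)"
proof -
  let ?M = "mpre \<Gamma> d c pr \<gamma> \<beta>"
  define z where "z = (\<lambda>\<alpha>. if \<alpha> \<in> ?M then (1::complex) else 0)"
  have z: "z \<in> ell2 \<Gamma> c \<tau> (\<tau> (d \<gamma>))"
    using sq_fin_supp(1)[of ?M z] fin by (auto simp: z_def ell2_def mpre_iff)
  have db: "delta \<beta> \<in> ell2 \<Gamma> c \<tau> (\<tau> (c \<gamma>))"
    using b by (intro delta_ell2) (auto simp: fibre_def)
  have "l2inner (delta \<beta>) (Lop \<Gamma> d c pr \<gamma> x) = l2inner z x" for x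
  proof -
    have "l2inner z x = (\<Sum>\<^sub>\<infinity>\<alpha>\<in>?M. cnj (z \<alpha>) * x \<alpha>)"
      unfolding l2inner_def by (rule infsum_cong_neutral) (auto simp: z_def)
    also have "\<dots> = (\<Sum>\<alpha>\<in>?M. x \<alpha>)" using fin by (simp add: z_def)
    finally show ?thesis by (simp add: l2inner_delta_left Lop_fin[OF fin])
  qed
  then show ?thesis using z db unfolding adj_dom_def by blast
qed

lemma infinite_sq_const_contra:
  fixes z :: "'g \<Rightarrow> complex"
  assumes s: "(\<lambda>i. (cmod (z i))\<^sup>2) summable_on UNIV" and inf: "infinite M"
    and zc: "\<And>\<alpha>. \<alpha> \<in> M \<Longrightarrow> z \<alpha> = w" and w: "w \<noteq> 0"
  shows False
proof -
  let ?I = "(\<Sum>\<^sub>\<infinity>i. (cmod (z i))\<^sup>2)"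
  let ?e = "(cmod w)\<^sup>2"
  have e: "?e > 0" using w by simp
  obtain B where B: "finite B" "card B = nat \<lceil>?I / ?e\<rceil> + 1" "B \<subseteq> M"
    using infinite_arbitrarily_large[OF inf] by blast
  have "(\<Sum>i\<in>B. (cmod (z i))\<^sup>2) \<le> ?I"
    by (rule finite_sum_le_infsum) (use s B in auto)
  moreover have "(\<Sum>i\<in>B. (cmod (z i))\<^sup>2) = real (card B) * ?e"
    using B zc by (simp add: subset_iff)
  ultimately have "real (card B) * ?e \<le> ?I" by simp
  moreover have "real (card B) > ?I / ?e" using B(2)
    using real_nat_ceiling_ge[of "?I / ?e"] by simp
  then have "real (card B) * ?e > ?I" using e by (simp add: pos_divide_less_eq)
  ultimately show False by simp
qed

lemma part_i_inf:
  assumes g: "\<gamma> \<in> \<Gamma>" and inf: "infinite (mpre \<Gamma> d c pr \<gamma> \<beta>)"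
    and y: "y \<in> adj_dom (ell2 \<Gamma> c \<tau> (\<tau> (d \<gamma>))) (ell2 \<Gamma> c \<tau> (\<tau> (c \<gamma>)))
                        (Ldom \<Gamma> d c \<tau> \<gamma>) (Lop \<Gamma> d c pr \<gamma>)"
  shows "l2inner y (delta \<beta>) = 0"
proof -
  let ?M = "mpre \<Gamma> d c pr \<gamma> \<beta>"
  obtain z where z: "z \<in> ell2 \<Gamma> c \<tau> (\<tau> (d \<gamma>))"
    and zp: "\<And>x. x \<in> Ldom \<Gamma> d c \<tau> \<gamma> \<Longrightarrow> l2inner y (Lop \<Gamma> d c pr \<gamma> x) = l2inner z x"
    using y unfolding adj_dom_def by blast
  have zc: "z \<alpha> = y \<beta>" if a: "\<alpha> \<in> ?M" for \<alpha>
  proof -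
    have "delta \<alpha> \<in> Ldom \<Gamma> d c \<tau> \<gamma>" using a by (intro delta_Ldom) (auto simp: mpre_iff)
    from zp[OF this] have "cnj (y \<beta>) = cnj (z \<alpha>)"
      by (simp add: Lop_delta[OF a] l2inner_delta_right)
    then show ?thesis by simp
  qed
  show ?thesis
  proof (rule ccontr)
    assume "l2inner y (delta \<beta>) \<noteq> 0"
    then have "y \<beta> \<noteq> 0" by (simp add: l2inner_delta_right)
    then show False using infinite_sq_const_contra[OF ell2_summable[OF z] inf zc] by blast
  qed
qed

end



context sgd begin

lemma Lop_supp:
  assumes "Lop \<Gamma> d c pr \<gamma> f \<eta> \<noteq> 0"
  shows "\<eta> \<in> pr \<gamma> ` {\<alpha>. f \<alpha> \<noteq> 0}"
proof -
  have "{\<alpha> \<in> mpre \<Gamma> d c pr \<gamma> \<eta>. f \<alpha> \<noteq> 0} \<noteq> {}"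
    using assms unfolding Lop_def by (metis sum.empty)
  then show ?thesis by (auto simp: mpre_iff)
qed

lemma Lop_Ldom_summable:
  assumes "x \<in> Ldom \<Gamma> d c \<tau> \<gamma>"
  shows "(\<lambda>i. (cmod (Lop \<Gamma> d c pr \<gamma> x i))\<^sup>2) summable_on UNIV"
proof -
  have "finite {\<alpha>. x \<alpha> \<noteq> 0}" using assms by (simp add: Ldom_def)
  then show ?thesis
    by (intro sq_fin_supp(1)[of "pr \<gamma> ` {\<alpha>. x \<alpha> \<noteq> 0}"]) (use Lop_supp in blast)+
qed

lemma closure_value:
  assumes g: "\<gamma> \<in> \<Gamma>" and fin: "\<And>\<eta>. finite (mpre \<Gamma> d c pr \<gamma> \<eta>)"
    and xy: "(x, y) \<in> graph_closure (ell2 \<Gamma> c \<tau> (\<tau> (d \<gamma>))) (ell2 \<Gamma> c \<tau> (\<tau> (c \<gamma>)))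
                   (Ldom \<Gamma> d c \<tau> \<gamma>) (Lop \<Gamma> d c pr \<gamma>)"
  shows "y \<eta> = (\<Sum>\<alpha>\<in>mpre \<Gamma> d c pr \<gamma> \<eta>. x \<alpha>)"
proof -
  obtain xs where xs: "\<And>n. xs n \<in> Ldom \<Gamma> d c \<tau> \<gamma>"
    and c1: "(\<lambda>n. l2norm (\<lambda>i. xs n i - x i)) \<longlonglongrightarrow> 0"
    and c2: "(\<lambda>n. l2norm (\<lambda>i. Lop \<Gamma> d c pr \<gamma> (xs n) i - y i)) \<longlonglongrightarrow> 0"
    and x: "x \<in> ell2 \<Gamma> c \<tau> (\<tau> (d \<gamma>))" and y: "y \<in> ell2 \<Gamma> c \<tau> (\<tau> (c \<gamma>))"
    using xy unfolding graph_closure_def by blast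
  have xsl: "xs n \<in> ell2 \<Gamma> c \<tau> (\<tau> (d \<gamma>))" for n using xs by (simp add: Ldom_def)
  have cx: "(\<lambda>n. xs n i) \<longlonglongrightarrow> x i" for i
  proof -
    have "(\<lambda>n. xs n i - x i) \<longlonglongrightarrow> 0"
    proof (rule Lim_null_comparison[OF _ c1])
      show "\<forall>\<^sub>F n in sequentially. norm (xs n i - x i) \<le> l2norm (\<lambda>i. xs n i - x i)"
        using coord_le_l2norm[OF sq_diff_summable[OF ell2_summable[OF xsl] ell2_summable[OF x]]]
        by simp
    qed
    then show ?thesis by (simp add: LIM_zero_iff)
  qed
  have cy: "(\<lambda>n. Lop \<Gamma> d c pr \<gamma> (xs n) \<eta>) \<longlonglongrightarrow> y \<eta>"
  proof -
    have "(\<lambda>n. Lop \<Gamma> d c pr \<gamma> (xs n) \<eta> - y \<eta>) \<longlonglongrightarrow> 0"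
    proof (rule Lim_null_comparison[OF _ c2])
      show "\<forall>\<^sub>F n in sequentially. norm (Lop \<Gamma> d c pr \<gamma> (xs n) \<eta> - y \<eta>)
              \<le> l2norm (\<lambda>i. Lop \<Gamma> d c pr \<gamma> (xs n) i - y i)"
        using coord_le_l2norm[OF sq_diff_summable[OF Lop_Ldom_summable[OF xs] ell2_summable[OF y]]]
        by simp
    qed
    then show ?thesis by (simp add: LIM_zero_iff)
  qed
  have "(\<lambda>n. Lop \<Gamma> d c pr \<gamma> (xs n) \<eta>) \<longlonglongrightarrow> (\<Sum>\<alpha>\<in>mpre \<Gamma> d c pr \<gamma> \<eta>. x \<alpha>)"
    unfolding Lop_fin[OF fin] by (intro tendsto_sum cx)
  then show ?thesis using cy LIMSEQ_unique by blast
qed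

lemma closable_iff:
  assumes g: "\<gamma> \<in> \<Gamma>"
  shows "closable_op (ell2 \<Gamma> c \<tau> (\<tau> (d \<gamma>))) (ell2 \<Gamma> c \<tau> (\<tau> (c \<gamma>)))
                   (Ldom \<Gamma> d c \<tau> \<gamma>) (Lop \<Gamma> d c pr \<gamma>)
       \<longleftrightarrow> (\<forall>\<beta> \<in> fibre \<Gamma> c (c \<gamma>). finite (mpre \<Gamma> d c pr \<gamma> \<beta>))"
proof
  assume fin: "\<forall>\<beta> \<in> fibre \<Gamma> c (c \<gamma>). finite (mpre \<Gamma> d c pr \<gamma> \<beta>)"
  have fin': "finite (mpre \<Gamma> d c pr \<gamma> \<eta>)" for \<eta>
    using fin mpre_empty[OF g, of \<eta>] by (cases "\<eta> \<in> fibre \<Gamma> c (c \<gamma>)") auto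
  show "closable_op (ell2 \<Gamma> c \<tau> (\<tau> (d \<gamma>))) (ell2 \<Gamma> c \<tau> (\<tau> (c \<gamma>)))
                   (Ldom \<Gamma> d c \<tau> \<gamma>) (Lop \<Gamma> d c pr \<gamma>)"
    unfolding closable_op_def
  proof (intro allI impI)
    fix x y y' assume "(x, y) \<in> graph_closure (ell2 \<Gamma> c \<tau> (\<tau> (d \<gamma>))) (ell2 \<Gamma> c \<tau> (\<tau> (c \<gamma>)))
                   (Ldom \<Gamma> d c \<tau> \<gamma>) (Lop \<Gamma> d c pr \<gamma>) \<and> (x, y') \<in> graph_closure (ell2 \<Gamma> c \<tau> (\<tau> (d \<gamma>))) (ell2 \<Gamma> c \<tau> (\<tau> (c \<gamma>)))
                   (Ldom \<Gamma> d c \<tau> \<gamma>) (Lop \<Gamma> d c pr \<gamma>)"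
    then show "y = y'" using closure_value[OF g fin'] by (intro ext) metis
  qed
next
  assume cl: "closable_op (ell2 \<Gamma> c \<tau> (\<tau> (d \<gamma>))) (ell2 \<Gamma> c \<tau> (\<tau> (c \<gamma>)))
                   (Ldom \<Gamma> d c \<tau> \<gamma>) (Lop \<Gamma> d c pr \<gamma>)"
  show "\<forall>\<beta> \<in> fibre \<Gamma> c (c \<gamma>). finite (mpre \<Gamma> d c pr \<gamma> \<beta>)"
  proof (rule ccontr)
    assume "\<not> ?thesis"
    then obtain \<beta> where b: "\<beta> \<in> fibre \<Gamma> c (c \<gamma>)" and inf: "infinite (mpre \<Gamma> d c pr \<gamma> \<beta>)"
      by blast
    obtain a :: "nat \<Rightarrow> 'g" where a: "inj a" "range a \<subseteq> mpre \<Gamma> d c pr \<gamma> \<beta>"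
      using infinite_countable_subset[OF inf] by blast
    define A where "A n = a ` {..n}" for n
    have A: "finite (A n)" "A n \<subseteq> mpre \<Gamma> d c pr \<gamma> \<beta>" "card (A n) = Suc n" for n
      using a by (auto simp: A_def card_image inj_on_subset)
    define xs where "xs n = (\<lambda>\<alpha>. if \<alpha> \<in> A n then complex_of_real (1 / real (Suc n)) else 0)" for n
    have xsD: "xs n \<in> Ldom \<Gamma> d c \<tau> \<gamma>" for n unfolding xs_def by (rule const_Ldom[OF g A(1,2)])
    have Lxs: "Lop \<Gamma> d c pr \<gamma> (xs n) = delta \<beta>" for n
    proof -
      have h: "complex_of_nat (Suc n) * complex_of_real (1 / real (Suc n)) = 1"
        by (simp add: of_real_divide field_simps del: of_nat_Suc)
      show ?thesis unfolding xs_def Lop_const[OF A(1,2)] A(3) h by (auto simp: delta_def)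
    qed
    have db: "delta \<beta> \<in> ell2 \<Gamma> c \<tau> (\<tau> (c \<gamma>))"
      using b by (intro delta_ell2) (auto simp: fibre_def)
    have z1: "(\<lambda>_. 0) \<in> ell2 \<Gamma> c \<tau> (\<tau> (d \<gamma>))" by (simp add: ell2_def)
    have z2: "(\<lambda>_. 0) \<in> ell2 \<Gamma> c \<tau> (\<tau> (c \<gamma>))" by (simp add: ell2_def)
    have l0: "l2norm (\<lambda>_::'g. 0::complex) = 0" by (simp add: l2norm_def)
    have nxs: "l2norm (\<lambda>i. xs n i - 0) = sqrt (real (Suc n)) * (1 / real (Suc n))" for n
    proof -
      have "l2norm (\<lambda>i. xs n i - 0) = sqrt (real (card (A n))) * cmod (complex_of_real (1 / real (Suc n)))"
        using l2norm_const[OF A(1), of n "complex_of_real (1 / real (Suc n))"] unfolding xs_def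
        by (simp only: diff_zero)
      then show ?thesis by (simp only: A(3) norm_of_real) simp
    qed
    have "(\<lambda>n. sqrt (real (Suc n)) * (1 / real (Suc n))) \<longlonglongrightarrow> 0" by real_asymp
    then have "(\<lambda>n. l2norm (\<lambda>i. xs n i - 0)) \<longlonglongrightarrow> 0" by (simp only: nxs)
    then have m1: "((\<lambda>_. 0), delta \<beta>) \<in> graph_closure (ell2 \<Gamma> c \<tau> (\<tau> (d \<gamma>))) (ell2 \<Gamma> c \<tau> (\<tau> (c \<gamma>)))
                   (Ldom \<Gamma> d c \<tau> \<gamma>) (Lop \<Gamma> d c pr \<gamma>)"
      unfolding graph_closure_def using xsD db z1 l0 by (auto simp: Lxs intro!: exI[of _ xs])
    have zD: "(\<lambda>_. 0) \<in> Ldom \<Gamma> d c \<tau> \<gamma>" by (simp add: Ldom_def ell2_def)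
    have L0: "Lop \<Gamma> d c pr \<gamma> (\<lambda>_. 0) = (\<lambda>_. 0)" by (simp add: Lop_def)
    have m2: "((\<lambda>_. 0), (\<lambda>_. 0)) \<in> graph_closure (ell2 \<Gamma> c \<tau> (\<tau> (d \<gamma>))) (ell2 \<Gamma> c \<tau> (\<tau> (c \<gamma>)))
                   (Ldom \<Gamma> d c \<tau> \<gamma>) (Lop \<Gamma> d c pr \<gamma>)"
      unfolding graph_closure_def
      using z2 by (auto simp: z1 l0 L0 intro!: exI[of _ "\<lambda>_ _. 0"] zD)
    have "delta \<beta> = (\<lambda>_. 0)" using cl m1 m2 unfolding closable_op_def by blast
    then show False by (metis delta_def zero_neq_one)
  qed
qed

end



context sgd begin

lemma Lop_norm_bound:
  assumes g: "\<gamma> \<in> \<Gamma>"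
    and N: "\<forall>\<beta> \<in> fibre \<Gamma> c (c \<gamma>). finite (mpre \<Gamma> d c pr \<gamma> \<beta>) \<and> card (mpre \<Gamma> d c pr \<gamma> \<beta>) \<le> N"
    and x: "x \<in> Ldom \<Gamma> d c \<tau> \<gamma>"
  shows "l2norm (Lop \<Gamma> d c pr \<gamma> x) \<le> real N * l2norm x"
proof -
  define F where "F = {\<alpha>. x \<alpha> \<noteq> 0}"
  have fF: "finite F" using x by (simp add: Ldom_def F_def)
  define G where "G = {\<alpha> \<in> F. \<alpha> \<in> \<Gamma> \<and> c \<alpha> = d \<gamma>}"
  have fG: "finite G" using fF by (simp add: G_def)
  define T where "T = pr \<gamma> ` G"
  have fT: "finite T" using fG by (simp add: T_def)
  define P where "P \<eta> = {\<alpha> \<in> G. pr \<gamma> \<alpha> = \<eta>}" for \<eta>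
  have Leq: "Lop \<Gamma> d c pr \<gamma> x \<eta> = (\<Sum>\<alpha>\<in>P \<eta>. x \<alpha>)" for \<eta>
  proof -
    have "{\<alpha> \<in> mpre \<Gamma> d c pr \<gamma> \<eta>. x \<alpha> \<noteq> 0} = P \<eta>"
      by (auto simp: P_def G_def F_def mpre_iff)
    then show ?thesis by (simp add: Lop_def)
  qed
  have L0: "Lop \<Gamma> d c pr \<gamma> x \<eta> = 0" if "\<eta> \<notin> T" for \<eta>
  proof -
    have "P \<eta> = {}" using that by (auto simp: P_def T_def)
    then show ?thesis by (simp add: Leq)
  qed
  have I1: "(\<Sum>\<^sub>\<infinity>i. (cmod (Lop \<Gamma> d c pr \<gamma> x i))\<^sup>2) = (\<Sum>\<eta>\<in>T. (cmod (Lop \<Gamma> d c pr \<gamma> x \<eta>))\<^sup>2)"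
    by (rule sq_fin_supp(2)[OF fT]) (use L0 in auto)
  have I2: "(\<Sum>\<^sub>\<infinity>i. (cmod (x i))\<^sup>2) = (\<Sum>\<alpha>\<in>F. (cmod (x \<alpha>))\<^sup>2)"
    by (rule sq_fin_supp(2)[OF fF]) (auto simp: F_def)
  have step: "(cmod (Lop \<Gamma> d c pr \<gamma> x \<eta>))\<^sup>2 \<le> real N * (\<Sum>\<alpha>\<in>P \<eta>. (cmod (x \<alpha>))\<^sup>2)"
    if eT: "\<eta> \<in> T" for \<eta>
  proof -
    obtain \<alpha>0 where a0: "\<alpha>0 \<in> G" "\<eta> = pr \<gamma> \<alpha>0" using eT by (auto simp: T_def)
    have "\<alpha>0 \<in> mpre \<Gamma> d c pr \<gamma> \<eta>" using a0 by (auto simp: G_def mpre_iff)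
    then have eb: "\<eta> \<in> fibre \<Gamma> c (c \<gamma>)" using mpre_target[OF g] by (auto simp: fibre_def)
    have sub: "P \<eta> \<subseteq> mpre \<Gamma> d c pr \<gamma> \<eta>" by (auto simp: P_def G_def mpre_iff)
    have cardP: "card (P \<eta>) \<le> N"
      using N eb card_mono[OF _ sub] by (meson order_trans)
    have fP: "finite (P \<eta>)" using fG by (simp add: P_def)
    have "cmod (Lop \<Gamma> d c pr \<gamma> x \<eta>) \<le> (\<Sum>\<alpha>\<in>P \<eta>. cmod (x \<alpha>))"
      unfolding Leq by (rule norm_sum)
    then have "(cmod (Lop \<Gamma> d c pr \<gamma> x \<eta>))\<^sup>2 \<le> (\<Sum>\<alpha>\<in>P \<eta>. cmod (x \<alpha>))\<^sup>2"
      by (simp add: power_mono)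
    also have "\<dots> \<le> (\<Sum>\<alpha>\<in>P \<eta>. (cmod (x \<alpha>))\<^sup>2) * card (P \<eta>)"
      by (rule sum_squared_le_sum_of_squares)
    also have "\<dots> \<le> (\<Sum>\<alpha>\<in>P \<eta>. (cmod (x \<alpha>))\<^sup>2) * real N"
      using cardP by (intro mult_left_mono) (auto intro: sum_nonneg)
    finally show ?thesis by (simp add: mult.commute)
  qed
  have "(\<Sum>\<eta>\<in>T. (cmod (Lop \<Gamma> d c pr \<gamma> x \<eta>))\<^sup>2) \<le> (\<Sum>\<eta>\<in>T. real N * (\<Sum>\<alpha>\<in>P \<eta>. (cmod (x \<alpha>))\<^sup>2))"
    by (rule sum_mono) (rule step)
  also have "\<dots> = real N * (\<Sum>\<alpha>\<in>G. (cmod (x \<alpha>))\<^sup>2)"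
    unfolding sum_distrib_left[symmetric] P_def
    using sum.group[OF fG fT, of "pr \<gamma>" "\<lambda>\<alpha>. (cmod (x \<alpha>))\<^sup>2"] by (simp add: T_def)
  also have "\<dots> \<le> real N * (\<Sum>\<alpha>\<in>F. (cmod (x \<alpha>))\<^sup>2)"
    by (intro mult_left_mono sum_mono2 fF) (auto simp: G_def)
  finally have sq: "(\<Sum>\<^sub>\<infinity>i. (cmod (Lop \<Gamma> d c pr \<gamma> x i))\<^sup>2) \<le> real N * (\<Sum>\<^sub>\<infinity>i. (cmod (x i))\<^sup>2)"
    using I1 I2 by simp
  have "l2norm (Lop \<Gamma> d c pr \<gamma> x) \<le> sqrt (real N) * l2norm x"
    unfolding l2norm_def using sq by (simp add: real_sqrt_mult[symmetric])
  also have "\<dots> \<le> real N * l2norm x"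
  proof (rule mult_right_mono)
    show "sqrt (real N) \<le> real N"
    proof (cases "N = 0")
      case False
      then have "real N \<le> (real N)\<^sup>2" by (simp add: power2_eq_square)
      from real_sqrt_le_mono[OF this] show ?thesis by simp
    qed simp
    show "0 \<le> l2norm x" unfolding l2norm_def by (simp add: infsum_nonneg)
  qed
  finally show ?thesis .
qed

lemma bounded_imp:
  assumes g: "\<gamma> \<in> \<Gamma>" and bd: "bounded_op (Ldom \<Gamma> d c \<tau> \<gamma>) (Lop \<Gamma> d c pr \<gamma>)"
  shows "\<exists>N::nat. \<forall>\<beta> \<in> fibre \<Gamma> c (c \<gamma>).
              finite (mpre \<Gamma> d c pr \<gamma> \<beta>) \<and> card (mpre \<Gamma> d c pr \<gamma> \<beta>) \<le> N"
proof -
  obtain C where C: "\<And>x. x \<in> Ldom \<Gamma> d c \<tau> \<gamma> \<Longrightarrow> l2norm (Lop \<Gamma> d c pr \<gamma> x) \<le> C * l2norm x"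
    using bd unfolding bounded_op_def by blast
  have key: "real (card A) \<le> C\<^sup>2" if A: "finite A" "A \<subseteq> mpre \<Gamma> d c pr \<gamma> \<beta>" for A \<beta>
  proof (cases "A = {}")
    case False
    let ?x = "\<lambda>\<alpha>. if \<alpha> \<in> A then (1::complex) else 0"
    have "l2norm (Lop \<Gamma> d c pr \<gamma> ?x) \<le> C * l2norm ?x" by (rule C[OF const_Ldom[OF g A]])
    moreover have "l2norm (Lop \<Gamma> d c pr \<gamma> ?x) = real (card A)"
    proof -
      have "Lop \<Gamma> d c pr \<gamma> ?x = (\<lambda>\<eta>. if \<eta> \<in> {\<beta>} then of_nat (card A) * 1 else 0)"
        unfolding Lop_const[OF A] by simp
      then show ?thesis using l2norm_const[of "{\<beta>}" "of_nat (card A) * 1"] by simp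
    qed
    moreover have "l2norm ?x = sqrt (real (card A))" using l2norm_const[OF A(1), of 1] by simp
    ultimately have h: "real (card A) \<le> C * sqrt (real (card A))" by simp
    have pos: "real (card A) > 0" using False A(1) by (simp add: card_gt_0_iff)
    have "sqrt (real (card A)) * sqrt (real (card A)) \<le> C * sqrt (real (card A))"
      using h pos by (simp only: real_sqrt_mult_self)
    then have "sqrt (real (card A)) \<le> C" using pos
      by (meson mult_right_le_imp_le real_sqrt_gt_0_iff)
    then have "(sqrt (real (card A)))\<^sup>2 \<le> C\<^sup>2" by (intro power_mono) auto
    then show ?thesis by simp
  qed simp
  define N where "N = nat \<lceil>C\<^sup>2\<rceil>"
  have "finite (mpre \<Gamma> d c pr \<gamma> \<beta>) \<and> card (mpre \<Gamma> d c pr \<gamma> \<beta>) \<le> N" for \<beta>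
  proof
    show fin: "finite (mpre \<Gamma> d c pr \<gamma> \<beta>)"
    proof (rule ccontr)
      assume "infinite (mpre \<Gamma> d c pr \<gamma> \<beta>)"
      then obtain B where B: "finite B" "card B = N + 1" "B \<subseteq> mpre \<Gamma> d c pr \<gamma> \<beta>"
        using infinite_arbitrarily_large by blast
      have "real (card B) \<le> C\<^sup>2" by (rule key[OF B(1,3)])
      moreover have "C\<^sup>2 \<le> real N" unfolding N_def by (rule real_nat_ceiling_ge)
      ultimately show False using B(2) by simp
    qed
    have "real (card (mpre \<Gamma> d c pr \<gamma> \<beta>)) \<le> real N"
      using key[OF fin order_refl] real_nat_ceiling_ge[of "C\<^sup>2"] unfolding N_def by linarith
    then show "card (mpre \<Gamma> d c pr \<gamma> \<beta>) \<le> N" by simp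
  qed
  then show ?thesis by blast
qed

lemma part_ii:
  assumes g: "\<gamma> \<in> \<Gamma>"
  shows "(bounded_op (Ldom \<Gamma> d c \<tau> \<gamma>) (Lop \<Gamma> d c pr \<gamma>) \<longleftrightarrow>
          (\<exists>N::nat. \<forall>\<beta> \<in> fibre \<Gamma> c (c \<gamma>).
              finite (mpre \<Gamma> d c pr \<gamma> \<beta>) \<and> card (mpre \<Gamma> d c pr \<gamma> \<beta>) \<le> N)) \<and>
       (\<forall>N::nat. (\<forall>\<beta> \<in> fibre \<Gamma> c (c \<gamma>).
              finite (mpre \<Gamma> d c pr \<gamma> \<beta>) \<and> card (mpre \<Gamma> d c pr \<gamma> \<beta>) \<le> N) \<longrightarrow>
          op_norm (Ldom \<Gamma> d c \<tau> \<gamma>) (Lop \<Gamma> d c pr \<gamma>) \<le> real N)"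
proof (intro conjI iffI allI impI)
  assume "bounded_op (Ldom \<Gamma> d c \<tau> \<gamma>) (Lop \<Gamma> d c pr \<gamma>)"
  then show "\<exists>N::nat. \<forall>\<beta> \<in> fibre \<Gamma> c (c \<gamma>).
              finite (mpre \<Gamma> d c pr \<gamma> \<beta>) \<and> card (mpre \<Gamma> d c pr \<gamma> \<beta>) \<le> N"
    by (rule bounded_imp[OF g])
next
  assume "\<exists>N::nat. \<forall>\<beta> \<in> fibre \<Gamma> c (c \<gamma>).
              finite (mpre \<Gamma> d c pr \<gamma> \<beta>) \<and> card (mpre \<Gamma> d c pr \<gamma> \<beta>) \<le> N"
  then obtain N :: nat where "\<forall>\<beta> \<in> fibre \<Gamma> c (c \<gamma>).
              finite (mpre \<Gamma> d c pr \<gamma> \<beta>) \<and> card (mpre \<Gamma> d c pr \<gamma> \<beta>) \<le> N" by blast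
  then show "bounded_op (Ldom \<Gamma> d c \<tau> \<gamma>) (Lop \<Gamma> d c pr \<gamma>)"
    unfolding bounded_op_def using Lop_norm_bound[OF g] by blast
next
  fix N :: nat
  assume N: "\<forall>\<beta> \<in> fibre \<Gamma> c (c \<gamma>).
              finite (mpre \<Gamma> d c pr \<gamma> \<beta>) \<and> card (mpre \<Gamma> d c pr \<gamma> \<beta>) \<le> N"
  have zD: "(\<lambda>_. 0) \<in> Ldom \<Gamma> d c \<tau> \<gamma>" by (simp add: Ldom_def ell2_def)
  show "op_norm (Ldom \<Gamma> d c \<tau> \<gamma>) (Lop \<Gamma> d c pr \<gamma>) \<le> real N"
    unfolding op_norm_def
  proof (rule cSup_least)
    show "{l2norm (Lop \<Gamma> d c pr \<gamma> x) |x. x \<in> Ldom \<Gamma> d c \<tau> \<gamma> \<and> l2norm x \<le> 1} \<noteq> {}"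
      using zD by (auto simp: l2norm_def)
    fix r assume "r \<in> {l2norm (Lop \<Gamma> d c pr \<gamma> x) |x. x \<in> Ldom \<Gamma> d c \<tau> \<gamma> \<and> l2norm x \<le> 1}"
    then obtain x where x: "x \<in> Ldom \<Gamma> d c \<tau> \<gamma>" "l2norm x \<le> 1" "r = l2norm (Lop \<Gamma> d c pr \<gamma> x)"
      by blast
    have "r \<le> real N * l2norm x" using Lop_norm_bound[OF g N x(1)] x(3) by simp
    also have "\<dots> \<le> real N * 1" using x(2) by (intro mult_left_mono) auto
    finally show "r \<le> real N" by simp
  qed
qed

end



context sgd begin

definition injc :: bool where
  "injc \<longleftrightarrow> (\<forall>\<gamma> \<in> \<Gamma>. \<forall>\<beta> \<in> fibre \<Gamma> c (d \<gamma>). \<forall>\<beta>' \<in> fibre \<Gamma> c (d \<gamma>).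
        \<beta> \<noteq> \<beta>' \<longrightarrow> pr \<gamma> \<beta> \<noteq> pr \<gamma> \<beta>')"

lemma mpre_uniq:
  assumes "injc" "\<gamma> \<in> \<Gamma>" "a \<in> mpre \<Gamma> d c pr \<gamma> \<eta>" "b \<in> mpre \<Gamma> d c pr \<gamma> \<eta>"
  shows "a = b"
  using assms unfolding injc_def by (auto simp: mpre_iff fibre_def)

lemma mpre_finite:
  assumes "injc" "\<gamma> \<in> \<Gamma>"
  shows "finite (mpre \<Gamma> d c pr \<gamma> \<eta>)"
proof (cases "mpre \<Gamma> d c pr \<gamma> \<eta> = {}")
  case False
  then obtain a where a: "a \<in> mpre \<Gamma> d c pr \<gamma> \<eta>" by blast
  then have "mpre \<Gamma> d c pr \<gamma> \<eta> \<subseteq> {a}" using mpre_uniq[OF assms] by blast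
  then show ?thesis using finite_subset by blast
qed simp

lemma Lop_pr:
  assumes "injc" "\<gamma> \<in> \<Gamma>" "\<alpha> \<in> fibre \<Gamma> c (d \<gamma>)"
  shows "Lop \<Gamma> d c pr \<gamma> f (pr \<gamma> \<alpha>) = f \<alpha>"
proof -
  have a: "\<alpha> \<in> mpre \<Gamma> d c pr \<gamma> (pr \<gamma> \<alpha>)" using assms(3) by (auto simp: mpre_iff fibre_def)
  then have "mpre \<Gamma> d c pr \<gamma> (pr \<gamma> \<alpha>) = {\<alpha>}" using mpre_uniq[OF assms(1,2) _ a] by blast
  then show ?thesis using Lop_fin[OF mpre_finite[OF assms(1,2)]] by simp
qed

lemma Lop_out:
  assumes "\<eta> \<notin> pr \<gamma> ` fibre \<Gamma> c (d \<gamma>)"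
  shows "Lop \<Gamma> d c pr \<gamma> f \<eta> = 0"
proof -
  have "mpre \<Gamma> d c pr \<gamma> \<eta> = {}" using assms by (auto simp: mpre_iff fibre_def)
  then show ?thesis by (simp add: Lop_def)
qed

lemma Lop_ell2:
  assumes inj: "injc" and g: "\<gamma> \<in> \<Gamma>" and f: "f \<in> ell2 \<Gamma> c \<tau> (\<tau> (d \<gamma>))"
  shows "Lop \<Gamma> d c pr \<gamma> f \<in> ell2 \<Gamma> c \<tau> (\<tau> (c \<gamma>))"
    "(\<Sum>\<^sub>\<infinity>i. (cmod (Lop \<Gamma> d c pr \<gamma> f i))\<^sup>2) = (\<Sum>\<^sub>\<infinity>i\<in>fibre \<Gamma> c (d \<gamma>). (cmod (f i))\<^sup>2)"
proof -
  let ?A = "fibre \<Gamma> c (d \<gamma>)"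
  let ?h = "pr \<gamma>"
  let ?q = "\<lambda>i. (cmod (Lop \<Gamma> d c pr \<gamma> f i))\<^sup>2"
  let ?p = "\<lambda>i. (cmod (f i))\<^sup>2"
  have injh: "inj_on ?h ?A"
  proof (rule inj_onI)
    fix x y assume "x \<in> ?A" "y \<in> ?A" "?h x = ?h y"
    then show "x = y" using inj g unfolding injc_def by meson
  qed
  have eq: "(?q \<circ> ?h) x = ?p x" if "x \<in> ?A" for x using Lop_pr[OF inj g that] by simp
  have out: "?q x = 0" if "x \<notin> ?h ` ?A" for x using Lop_out[OF that] by simp
  have pU: "?p summable_on UNIV" using f by (simp add: ell2_def)
  have pA: "?p summable_on ?A" by (rule summable_on_subset_banach[OF pU]) simp
  have "(?q \<circ> ?h) summable_on ?A \<longleftrightarrow> ?p summable_on ?A"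
    by (rule summable_on_cong) (rule eq)
  then have "?q summable_on (?h ` ?A)" unfolding summable_on_reindex[OF injh]
    using pA by blast
  moreover have "?q summable_on UNIV \<longleftrightarrow> ?q summable_on (?h ` ?A)"
    apply (rule summable_on_cong_neutral)
      apply blast
     apply (rule out, blast)
    apply (rule refl)
    done
  ultimately have qs: "?q summable_on UNIV" by blast
  have "infsum ?q UNIV = infsum ?q (?h ` ?A)"
    apply (rule infsum_cong_neutral)
      apply blast
     apply (rule out, blast)
    apply (rule refl)
    done
  also have "\<dots> = infsum (?q \<circ> ?h) ?A" by (rule infsum_reindex[OF injh])
  also have "\<dots> = infsum ?p ?A" by (rule infsum_cong) (rule eq)
  finally show "infsum ?q UNIV = infsum ?p ?A" .
  have supp: "\<gamma>' \<in> \<Gamma> \<and> \<tau> (c \<gamma>') = \<tau> (c \<gamma>)" if "Lop \<Gamma> d c pr \<gamma> f \<gamma>' \<noteq> 0" for \<gamma>'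
  proof -
    have "\<gamma>' \<in> ?h ` ?A"
    proof (rule ccontr)
      assume "\<gamma>' \<notin> ?h ` ?A"
      then have "Lop \<Gamma> d c pr \<gamma> f \<gamma>' = 0" by (rule Lop_out)
      with that show False by simp
    qed
    then obtain a where a: "a \<in> \<Gamma>" "c a = d \<gamma>" "\<gamma>' = pr \<gamma> a" by (auto simp: fibre_def)
    then show ?thesis using prod_props[OF g a(1,2)] by simp
  qed
  show "Lop \<Gamma> d c pr \<gamma> f \<in> ell2 \<Gamma> c \<tau> (\<tau> (c \<gamma>))"
    unfolding ell2_def using supp qs by blast
qed

lemma Lop_bl:
  assumes inj: "injc" and g: "\<gamma> \<in> \<Gamma>"
  shows "bounded_linear_on (ell2 \<Gamma> c \<tau> (\<tau> (d \<gamma>))) (ell2 \<Gamma> c \<tau> (\<tau> (c \<gamma>))) (Lop \<Gamma> d c pr \<gamma>)"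
  unfolding bounded_linear_on_def
proof (intro conjI ballI allI exI[of _ 1])
  fix f assume f: "f \<in> ell2 \<Gamma> c \<tau> (\<tau> (d \<gamma>))"
  show "Lop \<Gamma> d c pr \<gamma> f \<in> ell2 \<Gamma> c \<tau> (\<tau> (c \<gamma>))" by (rule Lop_ell2(1)[OF inj g f])
  have "(\<Sum>\<^sub>\<infinity>i\<in>fibre \<Gamma> c (d \<gamma>). (cmod (f i))\<^sup>2) \<le> (\<Sum>\<^sub>\<infinity>i. (cmod (f i))\<^sup>2)"
  proof (rule infsum_mono_neutral)
    show pU: "(\<lambda>i. (cmod (f i))\<^sup>2) summable_on UNIV" using f by (simp add: ell2_def)
    show "(\<lambda>i. (cmod (f i))\<^sup>2) summable_on fibre \<Gamma> c (d \<gamma>)"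
      by (rule summable_on_subset_banach[OF pU]) simp
  qed auto
  then show "l2norm (Lop \<Gamma> d c pr \<gamma> f) \<le> 1 * l2norm f"
    unfolding l2norm_def Lop_ell2(2)[OF inj g f] by simp
next
  fix f g :: "'g \<Rightarrow> complex" and a :: complex
  show "Lop \<Gamma> d c pr \<gamma> (\<lambda>i. a * f i + g i) = (\<lambda>j. a * Lop \<Gamma> d c pr \<gamma> f j + Lop \<Gamma> d c pr \<gamma> g j)"
    by (rule ext) (simp add: Lop_fin[OF mpre_finite[OF inj \<open>\<gamma> \<in> \<Gamma>\<close>]] sum.distrib sum_distrib_left)
qed

lemma Lop_pi:
  assumes inj: "injc" and g: "\<gamma> \<in> \<Gamma>"
  shows "partial_isometry (ell2 \<Gamma> c \<tau> (\<tau> (d \<gamma>))) (ell2 \<Gamma> c \<tau> (\<tau> (c \<gamma>))) (Lop \<Gamma> d c pr \<gamma>)"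
  unfolding partial_isometry_def
proof (intro conjI Lop_bl[OF inj g] ballI impI)
  fix f assume f: "f \<in> ell2 \<Gamma> c \<tau> (\<tau> (d \<gamma>))"
    and ker: "\<forall>k\<in>ell2 \<Gamma> c \<tau> (\<tau> (d \<gamma>)). Lop \<Gamma> d c pr \<gamma> k = (\<lambda>_. 0) \<longrightarrow> l2inner k f = 0"
  have supp: "f \<alpha> = 0" if "\<alpha> \<notin> fibre \<Gamma> c (d \<gamma>)" for \<alpha>
  proof (rule ccontr)
    assume nz: "f \<alpha> \<noteq> 0"
    then have a: "\<alpha> \<in> \<Gamma>" "\<tau> (c \<alpha>) = \<tau> (d \<gamma>)" using f by (auto simp: ell2_def)
    then have ca: "c \<alpha> \<noteq> d \<gamma>" using that by (auto simp: fibre_def)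
    have "delta \<alpha> \<in> ell2 \<Gamma> c \<tau> (\<tau> (d \<gamma>))" by (rule delta_ell2[OF a])
    then have "l2inner (delta \<alpha>) f = 0" using ker Lop_delta0[OF ca] by blast
    then show False using nz by (simp add: l2inner_delta_left)
  qed
  have "(\<Sum>\<^sub>\<infinity>i\<in>fibre \<Gamma> c (d \<gamma>). (cmod (f i))\<^sup>2) = (\<Sum>\<^sub>\<infinity>i. (cmod (f i))\<^sup>2)"
    by (rule infsum_cong_neutral) (use supp in auto)
  then show "l2norm (Lop \<Gamma> d c pr \<gamma> f) = l2norm f"
    unfolding l2norm_def Lop_ell2(2)[OF inj g f] by simp
qed

lemma Lop_comp:
  assumes inj: "injc" and a: "\<alpha> \<in> \<Gamma>" and b: "\<beta> \<in> \<Gamma>" and ab: "d \<alpha> = c \<beta>"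
  shows "Lop \<Gamma> d c pr (pr \<alpha> \<beta>) f = Lop \<Gamma> d c pr \<alpha> (Lop \<Gamma> d c pr \<beta> f)"
proof
  fix \<eta>
  have abG: "pr \<alpha> \<beta> \<in> \<Gamma>" and dab: "d (pr \<alpha> \<beta>) = d \<beta>" using prod_props[OF a b] ab by auto
  have U: "(\<Union>\<delta>\<in>mpre \<Gamma> d c pr \<alpha> \<eta>. mpre \<Gamma> d c pr \<beta> \<delta>) = mpre \<Gamma> d c pr (pr \<alpha> \<beta>) \<eta>"
  proof (intro equalityI subsetI)
    fix \<epsilon> assume "\<epsilon> \<in> (\<Union>\<delta>\<in>mpre \<Gamma> d c pr \<alpha> \<eta>. mpre \<Gamma> d c pr \<beta> \<delta>)"
    then obtain \<delta> where d1: "\<delta> \<in> mpre \<Gamma> d c pr \<alpha> \<eta>" and e1: "\<epsilon> \<in> mpre \<Gamma> d c pr \<beta> \<delta>" by blast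
    show "\<epsilon> \<in> mpre \<Gamma> d c pr (pr \<alpha> \<beta>) \<eta>"
      using d1 e1 assoc[OF a b, of \<epsilon>] ab dab by (auto simp: mpre_iff)
  next
    fix \<epsilon> assume e: "\<epsilon> \<in> mpre \<Gamma> d c pr (pr \<alpha> \<beta>) \<eta>"
    then have eG: "\<epsilon> \<in> \<Gamma>" "c \<epsilon> = d \<beta>" "pr (pr \<alpha> \<beta>) \<epsilon> = \<eta>" using dab by (auto simp: mpre_iff)
    have "pr \<beta> \<epsilon> \<in> mpre \<Gamma> d c pr \<alpha> \<eta>"
      using prod_props[OF b eG(1)] eG assoc[OF a b eG(1) ab] by (auto simp: mpre_iff ab)
    moreover have "\<epsilon> \<in> mpre \<Gamma> d c pr \<beta> (pr \<beta> \<epsilon>)" using eG by (auto simp: mpre_iff)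
    ultimately show "\<epsilon> \<in> (\<Union>\<delta>\<in>mpre \<Gamma> d c pr \<alpha> \<eta>. mpre \<Gamma> d c pr \<beta> \<delta>)" by blast
  qed
  have "Lop \<Gamma> d c pr \<alpha> (Lop \<Gamma> d c pr \<beta> f) \<eta>
        = (\<Sum>\<delta>\<in>mpre \<Gamma> d c pr \<alpha> \<eta>. \<Sum>\<epsilon>\<in>mpre \<Gamma> d c pr \<beta> \<delta>. f \<epsilon>)"
    by (simp add: Lop_fin[OF mpre_finite[OF inj a]] Lop_fin[OF mpre_finite[OF inj b]])
  also have "\<dots> = (\<Sum>\<epsilon>\<in>(\<Union>\<delta>\<in>mpre \<Gamma> d c pr \<alpha> \<eta>. mpre \<Gamma> d c pr \<beta> \<delta>). f \<epsilon>)"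
    by (rule sum.UNION_disjoint[symmetric])
       (auto simp: mpre_finite[OF inj a] mpre_finite[OF inj b] mpre_iff)
  also have "\<dots> = Lop \<Gamma> d c pr (pr \<alpha> \<beta>) f \<eta>"
    unfolding U by (simp add: Lop_fin[OF mpre_finite[OF inj abG]])
  finally show "Lop \<Gamma> d c pr (pr \<alpha> \<beta>) f \<eta> = Lop \<Gamma> d c pr \<alpha> (Lop \<Gamma> d c pr \<beta> f) \<eta>" by simp
qed

lemma part_iii:
  assumes inj: "injc"
  shows "\<exists>V. (\<forall>\<gamma> \<in> \<Gamma>. (\<forall>f \<in> Ldom \<Gamma> d c \<tau> \<gamma>. V \<gamma> f = Lop \<Gamma> d c pr \<gamma> f) \<and>
                     partial_isometry (ell2 \<Gamma> c \<tau> (\<tau> (d \<gamma>))) (ell2 \<Gamma> c \<tau> (\<tau> (c \<gamma>))) (V \<gamma>)) \<and>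
           is_orthogonal_rep \<Gamma> d c pr (ell2 \<Gamma> c \<tau>) \<tau> V"
proof (intro exI[of _ "Lop \<Gamma> d c pr"] conjI ballI)
  fix \<gamma> assume g: "\<gamma> \<in> \<Gamma>"
  show "partial_isometry (ell2 \<Gamma> c \<tau> (\<tau> (d \<gamma>))) (ell2 \<Gamma> c \<tau> (\<tau> (c \<gamma>))) (Lop \<Gamma> d c pr \<gamma>)"
    by (rule Lop_pi[OF inj g])
next
  show "is_orthogonal_rep \<Gamma> d c pr (ell2 \<Gamma> c \<tau>) \<tau> (Lop \<Gamma> d c pr)"
    unfolding is_orthogonal_rep_def is_representation_def
  proof (intro conjI ballI impI)
    fix \<alpha> assume "\<alpha> \<in> \<Gamma>"
    then show "bounded_linear_on (ell2 \<Gamma> c \<tau> (\<tau> (d \<alpha>))) (ell2 \<Gamma> c \<tau> (\<tau> (c \<alpha>))) (Lop \<Gamma> d c pr \<alpha>)"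
      by (rule Lop_bl[OF inj])
  next
    fix \<alpha> \<beta> f assume "\<alpha> \<in> \<Gamma>" "\<beta> \<in> \<Gamma>" "d \<alpha> = c \<beta>"
    then show "Lop \<Gamma> d c pr (pr \<alpha> \<beta>) f = Lop \<Gamma> d c pr \<alpha> (Lop \<Gamma> d c pr \<beta> f)"
      by (rule Lop_comp[OF inj])
  next
    fix \<alpha> \<beta> f g assume a: "\<alpha> \<in> \<Gamma>" and b: "\<beta> \<in> \<Gamma>" and cc: "\<tau> (c \<alpha>) = \<tau> (c \<beta>) \<and> c \<alpha> \<noteq> c \<beta>"
    have "cnj (Lop \<Gamma> d c pr \<alpha> f \<eta>) * Lop \<Gamma> d c pr \<beta> g \<eta> = 0" for \<eta>
    proof (rule ccontr)
      assume "cnj (Lop \<Gamma> d c pr \<alpha> f \<eta>) * Lop \<Gamma> d c pr \<beta> g \<eta> \<noteq> 0"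
      then have "\<eta> \<in> pr \<alpha> ` fibre \<Gamma> c (d \<alpha>)" "\<eta> \<in> pr \<beta> ` fibre \<Gamma> c (d \<beta>)"
        using Lop_out by fastforce+
      then have "c \<eta> = c \<alpha>" "c \<eta> = c \<beta>"
        using prod_props[OF a] prod_props[OF b] by (auto simp: fibre_def)
      then show False using cc by simp
    qed
    then have "(\<lambda>\<eta>. cnj (Lop \<Gamma> d c pr \<alpha> f \<eta>) * Lop \<Gamma> d c pr \<beta> g \<eta>) = (\<lambda>_. 0)"
      by (rule ext)
    then show "l2inner (Lop \<Gamma> d c pr \<alpha> f) (Lop \<Gamma> d c pr \<beta> g) = 0"
      unfolding l2inner_def by (simp only: infsum_0_simp)
  qed
qed simp

end


theorem mainTheorem13:
  fixes \<Gamma> :: "'g set" and S :: "'s set" and d c :: "'g \<Rightarrow> 's"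
    and pr :: "'g \<Rightarrow> 'g \<Rightarrow> 'g" and X :: "'x set" and \<tau> :: "'s \<Rightarrow> 'x"
  assumes sg: "semigroupoid \<Gamma> S d c pr"
    and tau: "\<tau> ` S \<subseteq> X"
  shows
   \<comment> \<open>(i)\<close>
   "(\<forall>\<gamma> \<in> \<Gamma>. \<forall>\<beta> \<in> fibre \<Gamma> c (c \<gamma>).
       (finite (mpre \<Gamma> d c pr \<gamma> \<beta>) \<longrightarrow>
          delta \<beta> \<in> adj_dom (ell2 \<Gamma> c \<tau> (\<tau> (d \<gamma>))) (ell2 \<Gamma> c \<tau> (\<tau> (c \<gamma>)))
                            (Ldom \<Gamma> d c \<tau> \<gamma>) (Lop \<Gamma> d c pr \<gamma>)) \<and>
       (infinite (mpre \<Gamma> d c pr \<gamma> \<beta>) \<longrightarrow>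
          (\<forall>y \<in> adj_dom (ell2 \<Gamma> c \<tau> (\<tau> (d \<gamma>))) (ell2 \<Gamma> c \<tau> (\<tau> (c \<gamma>)))
                        (Ldom \<Gamma> d c \<tau> \<gamma>) (Lop \<Gamma> d c pr \<gamma>). l2inner y (delta \<beta>) = 0))) \<and>
    (\<forall>\<gamma> \<in> \<Gamma>.
       closable_op (ell2 \<Gamma> c \<tau> (\<tau> (d \<gamma>))) (ell2 \<Gamma> c \<tau> (\<tau> (c \<gamma>)))
                   (Ldom \<Gamma> d c \<tau> \<gamma>) (Lop \<Gamma> d c pr \<gamma>)
       \<longleftrightarrow> (\<forall>\<beta> \<in> fibre \<Gamma> c (c \<gamma>). finite (mpre \<Gamma> d c pr \<gamma> \<beta>))) \<and>
   \<comment> \<open>(ii)\<close>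
    (\<forall>\<gamma> \<in> \<Gamma>.
       (bounded_op (Ldom \<Gamma> d c \<tau> \<gamma>) (Lop \<Gamma> d c pr \<gamma>) \<longleftrightarrow>
          (\<exists>N::nat. \<forall>\<beta> \<in> fibre \<Gamma> c (c \<gamma>).
              finite (mpre \<Gamma> d c pr \<gamma> \<beta>) \<and> card (mpre \<Gamma> d c pr \<gamma> \<beta>) \<le> N)) \<and>
       (\<forall>N::nat. (\<forall>\<beta> \<in> fibre \<Gamma> c (c \<gamma>).
              finite (mpre \<Gamma> d c pr \<gamma> \<beta>) \<and> card (mpre \<Gamma> d c pr \<gamma> \<beta>) \<le> N) \<longrightarrow>
          op_norm (Ldom \<Gamma> d c \<tau> \<gamma>) (Lop \<Gamma> d c pr \<gamma>) \<le> real N)) \<and>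
   \<comment> \<open>(iii)\<close>
    ((\<forall>\<gamma> \<in> \<Gamma>. \<forall>\<beta> \<in> fibre \<Gamma> c (d \<gamma>). \<forall>\<beta>' \<in> fibre \<Gamma> c (d \<gamma>).
        \<beta> \<noteq> \<beta>' \<longrightarrow> pr \<gamma> \<beta> \<noteq> pr \<gamma> \<beta>') \<longrightarrow>
      (\<exists>V. (\<forall>\<gamma> \<in> \<Gamma>. (\<forall>f \<in> Ldom \<Gamma> d c \<tau> \<gamma>. V \<gamma> f = Lop \<Gamma> d c pr \<gamma> f) \<and>
                     partial_isometry (ell2 \<Gamma> c \<tau> (\<tau> (d \<gamma>))) (ell2 \<Gamma> c \<tau> (\<tau> (c \<gamma>))) (V \<gamma>)) \<and>
           is_orthogonal_rep \<Gamma> d c pr (ell2 \<Gamma> c \<tau>) \<tau> V))"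
proof -
  interpret sgd \<Gamma> S d c pr \<tau> by unfold_locales (rule sg)
  have P1: "\<forall>\<gamma> \<in> \<Gamma>. \<forall>\<beta> \<in> fibre \<Gamma> c (c \<gamma>).
       (finite (mpre \<Gamma> d c pr \<gamma> \<beta>) \<longrightarrow>
          delta \<beta> \<in> adj_dom (ell2 \<Gamma> c \<tau> (\<tau> (d \<gamma>))) (ell2 \<Gamma> c \<tau> (\<tau> (c \<gamma>)))
                            (Ldom \<Gamma> d c \<tau> \<gamma>) (Lop \<Gamma> d c pr \<gamma>)) \<and>
       (infinite (mpre \<Gamma> d c pr \<gamma> \<beta>) \<longrightarrow>
          (\<forall>y \<in> adj_dom (ell2 \<Gamma> c \<tau> (\<tau> (d \<gamma>))) (ell2 \<Gamma> c \<tau> (\<tau> (c \<gamma>)))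
                        (Ldom \<Gamma> d c \<tau> \<gamma>) (Lop \<Gamma> d c pr \<gamma>). l2inner y (delta \<beta>) = 0))"
    using part_i_fin part_i_inf by blast
  show ?thesis
    using P1 closable_iff part_ii part_iii unfolding injc_def by blast
qed

end
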